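(* Let $G$ be a countable discrete group acting minimally by homeomorphisms on a compact Hausdorff space $X$, and fix $x\in X$. There is a net $(\mu_\lambda)\subseteq P_f(G,C(X))$ such that for every $\nu\in P(X)$, $\nu\mu_\lambda\to\delta_x$ in the weak* topology.
   Context: Minimal means every orbit is dense; $(g\cdot f)(y)=f(g^{-1}y)$ on $C(X)$. $P(X)$ is the set of regular Borel probability measures on $X$, identified with states on $C(X)$. A generalized $(G,C(X))$-probability measure is a formal sum $\mu=\sum_{i\in I}f_is_if_i$ with $I$ an index set, $s_i\in G$ (repetitions allowed), $f_i\in C(X)$, $f_i\ge0$, $f_i\ne0$, $\sum_if_i^2=1$; $P_f(G,C(X))$ is the set of these with $I$ finite. For $h\in C(X)$, $\mu h=\sum_if_i^2(s_i\cdot h)$, and $(\nu\mu)(h)=\nu(\mu h)$. *)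

theory Defs
  imports "HOL-Analysis.Analysis" "HOL-Probability.Probability" "HOL-Algebra.Group_Action"
begin

definition fun_act :: "('g, 'm) monoid_scheme \<Rightarrow> ('g \<Rightarrow> 'a \<Rightarrow> 'a) \<Rightarrow> 'g \<Rightarrow> ('a \<Rightarrow> real) \<Rightarrow> 'a \<Rightarrow> real"
  where "fun_act G \<phi> g f = (\<lambda>y. f (\<phi> (inv\<^bsub>G\<^esub> g) y))"

text \<open>A finite generalized (G,C(X))-probability measure, given as a finite list of
  terms (s_i, f_i) of the formal sum  sum_i f_i s_i f_i.\<close>
definition Pf :: "('g, 'm) monoid_scheme \<Rightarrow> (('g \<times> ('a::topological_space \<Rightarrow> real)) list) set"
  where "Pf G = {\<mu>. (\<forall>(s, f) \<in> set \<mu>. s \<in> carrier G \<and> continuous_on UNIV f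
                        \<and> (\<forall>y. f y \<ge> 0) \<and> f \<noteq> (\<lambda>_. 0))
                 \<and> (\<lambda>y. \<Sum>(s, f) \<leftarrow> \<mu>. (f y)\<^sup>2) = (\<lambda>_. 1)}"

definition gen_apply :: "('g, 'm) monoid_scheme \<Rightarrow> ('g \<Rightarrow> 'a \<Rightarrow> 'a) \<Rightarrow> ('g \<times> ('a \<Rightarrow> real)) list
    \<Rightarrow> ('a \<Rightarrow> real) \<Rightarrow> 'a \<Rightarrow> real"
  where "gen_apply G \<phi> \<mu> h = (\<lambda>y. \<Sum>(s, f) \<leftarrow> \<mu>. (f y)\<^sup>2 * fun_act G \<phi> s h y)"

definition regular_borel_prob :: "'a::topological_space measure \<Rightarrow> bool"
  where "regular_borel_prob \<nu> \<longleftrightarrow> prob_space \<nu> \<and> sets \<nu> = sets borel \<and>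
     (\<forall>A \<in> sets borel.
        emeasure \<nu> A = (SUP K \<in> {K. compact K \<and> K \<subseteq> A}. emeasure \<nu> K) \<and>
        emeasure \<nu> A = (INF U \<in> {U. open U \<and> A \<subseteq> U}. emeasure \<nu> U))"

definition minimal_action :: "('g, 'm) monoid_scheme \<Rightarrow> ('g \<Rightarrow> 'a::topological_space \<Rightarrow> 'a) \<Rightarrow> bool"
  where "minimal_action G \<phi> \<longleftrightarrow> (\<forall>y. closure (orbit G \<phi> y) = UNIV)"

end

theory Submission
  imports Defs
begin

lemma urysohn_pt:
  fixes y :: "'a::t2_space" and V :: "'a set"
  assumes "compact (UNIV::'a set)" "open V" "y \<in> V"
  obtains u :: "'a \<Rightarrow> real" where "continuous_on UNIV u" "\<And>z. 0 \<le> u z" "u y = 1"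
    "\<And>z. z \<notin> V \<Longrightarrow> u z = 0"
proof -
  have H: "Hausdorff_space (euclidean::'a topology)"
    unfolding Hausdorff_space_def by (simp add: separation_t2 disjnt_def)
  have C: "compact_space (euclidean::'a topology)"
    using assms(1) by (simp add: compact_space_def)
  have N: "normal_space (euclidean::'a topology)"
    using compact_Hausdorff_or_regular_imp_normal_space[OF C] H by blast
  obtain f where f: "continuous_map euclidean (top_of_set {0..1::real}) f" "f ` (-V) \<subseteq> {0}" "f ` {y} \<subseteq> {1}"
    using Urysohn_lemma[OF N, of "-V" "{y}" 0 1] assms by (auto simp: disjnt_def closed_Compl)
  show ?thesis
  proof
    show "continuous_on UNIV f" using f(1)
      by (metis continuous_map_into_fulltopology continuous_map_iff_continuous subtopology_UNIV)
    show "0 \<le> f z" for z using f(1) by (auto simp: continuous_map_def)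
  qed (use f in auto)
qed


lemma key:
  fixes G :: "('g, 'm) monoid_scheme"
    and \<phi> :: "'g \<Rightarrow> 'a::t2_space \<Rightarrow> 'a"
    and x :: 'a
  assumes grp: "group G"
    and cpt: "compact (UNIV :: 'a set)"
    and cont: "\<forall>g \<in> carrier G. continuous_on UNIV (\<phi> g)"
    and mini: "minimal_action G \<phi>"
    and fin: "finite H" and Hc: "\<forall>h\<in>H. continuous_on UNIV (h::'a\<Rightarrow>real)" and e: "e > 0"
  shows "\<exists>\<mu>\<in>Pf G. \<forall>h\<in>H. \<forall>y. \<bar>gen_apply G \<phi> \<mu> h y - h x\<bar> \<le> e"
proof -
  define U where "U = (\<Inter>h\<in>H. {z. \<bar>h z - h x\<bar> < e})"
  have oh: "open {z. \<bar>h z - h x\<bar> < e}" if "h \<in> H" for h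
  proof -
    have "continuous_on UNIV (\<lambda>z. \<bar>h z - h x\<bar>)" using Hc that by (auto intro!: continuous_intros)
    thus ?thesis
      using open_Collect_less[of "\<lambda>z. \<bar>h z - h x\<bar>" "\<lambda>_. e"] by auto
  qed
  have oU: "open U" unfolding U_def using fin oh by (intro open_INT) auto
  have xU: "x \<in> U" using e by (auto simp: U_def)
  have ex: "\<exists>g\<in>carrier G. \<phi> g y \<in> U" for y
  proof (rule ccontr)
    assume "\<not> ?thesis"
    hence "orbit G \<phi> y \<subseteq> -U" by (auto simp: orbit_def)
    hence "closure (orbit G \<phi> y) \<subseteq> -U" using oU by (simp add: closure_minimal closed_Compl)
    thus False using mini xU by (auto simp: minimal_action_def)
  qed
  define g where "g y = (SOME g. g \<in> carrier G \<and> \<phi> g y \<in> U)" for y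
  have g: "g y \<in> carrier G" "\<phi> (g y) y \<in> U" for y
    using someI_ex[OF ex[of y, unfolded Bex_def]] by (auto simp: g_def)
  define V where "V y = \<phi> (g y) -` U" for y
  have oV: "open (V y)" for y
    using continuous_on_open_vimage[of UNIV "\<phi> (g y)"] cont g oU by (auto simp: V_def)
  have yV: "y \<in> V y" for y using g by (auto simp: V_def)
  have exu: "\<exists>u::'a\<Rightarrow>real. continuous_on UNIV u \<and> (\<forall>z. 0 \<le> u z) \<and> u y = 1 \<and> (\<forall>z. z \<notin> V y \<longrightarrow> u z = 0)" for y
    using urysohn_pt[OF cpt oV yV] by metis
  define u where "u y = (SOME u::'a\<Rightarrow>real. continuous_on UNIV u \<and> (\<forall>z. 0 \<le> u z) \<and> u y = 1 \<and> (\<forall>z. z \<notin> V y \<longrightarrow> u z = 0))" for y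
  have u: "continuous_on UNIV (u y)" "\<And>z. 0 \<le> u y z" "u y y = 1" "\<And>z. z \<notin> V y \<Longrightarrow> u y z = 0" for y
    using someI_ex[OF exu[of y]] by (auto simp: u_def)
  have oW: "open {z. 0 < u y z}" for y
    using open_Collect_less[of "\<lambda>_. 0" "u y"] u(1) by simp
  obtain Y where Y: "finite Y" "UNIV \<subseteq> (\<Union>y\<in>Y. {z. 0 < u y z})"
  proof -
    have cov: "UNIV \<subseteq> (\<Union>y\<in>(UNIV::'a set). {z. 0 < u y z})"
    proof
      fix z :: 'a show "z \<in> (\<Union>y\<in>(UNIV::'a set). {z. 0 < u y z})" using u(3)[of z] by (auto intro!: exI[of _ z])
    qed
    show ?thesis using compactE_image[OF cpt oW cov] that by blast
  qed
  obtain ys where ys: "set ys = Y" "distinct ys" using finite_distinct_list[OF Y(1)] by blast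
  define S where "S z = (\<Sum>y\<in>Y. u y z)" for z
  have Spos: "S z > 0" for z
  proof -
    obtain y where "y \<in> Y" "0 < u y z" using Y(2) by blast
    thus ?thesis unfolding S_def using Y(1) u(2)
      by (metis sum_pos2)
  qed
  define f where "f y z = sqrt (u y z / S z)" for y z
  have fsq: "(f y z)\<^sup>2 = u y z / S z" for y z
    unfolding f_def using u(2)[of y z] Spos[of z] by simp
  have contS: "continuous_on UNIV S" unfolding S_def
    by (intro continuous_on_sum) (use u(1) in auto)
  have contf: "continuous_on UNIV (f y)" for y
    unfolding f_def using Spos
    by (intro continuous_intros u(1) contS) (auto simp: less_imp_neq[symmetric])
  define \<mu> where "\<mu> = map (\<lambda>y. (inv\<^bsub>G\<^esub> (g y), f y)) ys"
  have sumeq: "(\<Sum>(s, f) \<leftarrow> \<mu>. P s f) = (\<Sum>y\<in>Y. P (inv\<^bsub>G\<^esub> (g y)) (f y))" for P :: "'g \<Rightarrow> ('a \<Rightarrow> real) \<Rightarrow> real"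
    unfolding \<mu>_def using ys by (simp add: sum_list_distinct_conv_sum_set comp_def)
  have one: "(\<Sum>y\<in>Y. (f y z)\<^sup>2) = 1" for z
    unfolding fsq using Spos[of z] by (simp add: sum_divide_distrib[symmetric] S_def)
  have Pf: "\<mu> \<in> Pf G"
    unfolding Pf_def
  proof (intro CollectI conjI ballI)
    fix p assume "p \<in> set \<mu>"
    then obtain y where p: "p = (inv\<^bsub>G\<^esub> (g y), f y)" by (auto simp: \<mu>_def)
    have "f y y \<noteq> 0" unfolding f_def using u(3)[of y] Spos[of y] by simp
    hence "f y \<noteq> (\<lambda>_. 0)" by metis
    then show "case p of (s, f) \<Rightarrow> s \<in> carrier G \<and> continuous_on UNIV f \<and> (\<forall>y. 0 \<le> f y) \<and> f \<noteq> (\<lambda>_. 0)"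
      using p g(1) grp contf u(2) Spos by (auto simp: f_def group.inv_closed less_imp_le)
  next
    show "(\<lambda>y. \<Sum>(s, f)\<leftarrow>\<mu>. (f y)\<^sup>2) = (\<lambda>_. 1)"
      using one by (simp add: sumeq)
  qed
  have "\<forall>h\<in>H. \<forall>z. \<bar>gen_apply G \<phi> \<mu> h z - h x\<bar> \<le> e"
  proof (intro ballI allI)
    fix h z assume hH: "h \<in> H"
    have "gen_apply G \<phi> \<mu> h z - h x = (\<Sum>y\<in>Y. (f y z)\<^sup>2 * (h (\<phi> (g y) z) - h x))"
    proof -
      have a: "gen_apply G \<phi> \<mu> h z = (\<Sum>y\<in>Y. (f y z)\<^sup>2 * h (\<phi> (g y) z))"
        unfolding gen_apply_def sumeq fun_act_def using grp g(1)
        by (simp add: group.inv_inv)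
      have b: "h x = (\<Sum>y\<in>Y. (f y z)\<^sup>2 * h x)"
        by (metis one sum_distrib_right mult_1)
      show ?thesis unfolding a by (subst b) (simp add: right_diff_distrib sum_subtractf)
    qed
    also have "\<bar>\<dots>\<bar> \<le> (\<Sum>y\<in>Y. \<bar>(f y z)\<^sup>2 * (h (\<phi> (g y) z) - h x)\<bar>)" by (rule sum_abs)
    also have "\<dots> \<le> (\<Sum>y\<in>Y. (f y z)\<^sup>2 * e)"
    proof (rule sum_mono)
      fix y assume "y \<in> Y"
      show "\<bar>(f y z)\<^sup>2 * (h (\<phi> (g y) z) - h x)\<bar> \<le> (f y z)\<^sup>2 * e"
      proof (cases "z \<in> V y")
        case True
        hence "\<bar>h (\<phi> (g y) z) - h x\<bar> < e" using hH by (auto simp: V_def U_def)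
        thus ?thesis by (simp add: abs_mult mult_left_mono)
      next
        case False
        thus ?thesis using u(4) fsq[of y z] e by simp
      qed
    qed
    also have "\<dots> = e" by (metis one sum_distrib_right mult_1)
    finally show "\<bar>gen_apply G \<phi> \<mu> h z - h x\<bar> \<le> e" .
  qed
  with Pf show ?thesis by blast
qed

lemma int_bound:
  fixes q :: "'a::topological_space \<Rightarrow> real"
  assumes nu: "regular_borel_prob \<nu>" and q: "continuous_on UNIV q" and b: "\<forall>y. \<bar>q y - c\<bar> \<le> e"
  shows "\<bar>integral\<^sup>L \<nu> q - c\<bar> \<le> e"
proof -
  interpret prob_space \<nu> using nu by (simp add: regular_borel_prob_def)
  have sb: "sets \<nu> = sets borel" using nu by (simp add: regular_borel_prob_def)
  have ms: "q \<in> borel_measurable \<nu>"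
    unfolding measurable_cong_sets[OF sb refl] by (rule borel_measurable_continuous_onI[OF q])
  have bd: "\<bar>q y\<bar> \<le> \<bar>c\<bar> + e" for y using b[rule_format, of y] by linarith
  have iq: "integrable \<nu> q"
    by (rule integrable_const_bound[where B="\<bar>c\<bar> + e", OF AE_I2 ms]) (use bd in simp)
  have ic: "integral\<^sup>L \<nu> (\<lambda>y. c) = c" using prob_space by simp
  have "integral\<^sup>L \<nu> q - c = integral\<^sup>L \<nu> (\<lambda>y. q y - c)"
    using Bochner_Integration.integral_diff[OF iq integrable_const[of c]] ic by simp
  also have "\<bar>\<dots>\<bar> \<le> integral\<^sup>L \<nu> (\<lambda>y. \<bar>q y - c\<bar>)" by (rule integral_abs_bound)
  also have "\<dots> \<le> integral\<^sup>L \<nu> (\<lambda>y. e)"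
  proof (rule integral_mono)
    show "integrable \<nu> (\<lambda>y. \<bar>q y - c\<bar>)" using iq by (intro integrable_abs Bochner_Integration.integrable_diff) auto
  qed (use b in auto)
  also have "\<dots> = e" using prob_space by simp
  finally show ?thesis .
qed

lemma cont_gen:
  fixes G :: "('g, 'm) monoid_scheme" and \<phi> :: "'g \<Rightarrow> 'a::topological_space \<Rightarrow> 'a"
  assumes grp: "group G" and cont: "\<forall>g \<in> carrier G. continuous_on UNIV (\<phi> g)"
    and hc: "continuous_on UNIV (h::'a \<Rightarrow> real)"
    and mu: "\<forall>(s, f) \<in> set \<mu>. s \<in> carrier G \<and> continuous_on UNIV f"
  shows "continuous_on UNIV (gen_apply G \<phi> \<mu> h)"
  unfolding gen_apply_def using mu
proof (induction \<mu>)
  case Nil then show ?case by simp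
next
  case (Cons p \<mu>)
  obtain s f where p: "p = (s, f)" by force
  have sc: "s \<in> carrier G" "continuous_on UNIV f" using Cons.prems by (auto simp: p)
  have "continuous_on UNIV (\<phi> (inv\<^bsub>G\<^esub> s))" using cont grp sc(1) by (simp add: group.inv_closed)
  hence "continuous_on UNIV (\<lambda>y. h (\<phi> (inv\<^bsub>G\<^esub> s) y))"
    by (rule continuous_on_compose2[OF hc]) auto
  hence c1: "continuous_on UNIV (\<lambda>y. (f y)\<^sup>2 * fun_act G \<phi> s h y)"
    unfolding fun_act_def by (intro continuous_intros sc(2))
  have "continuous_on UNIV (\<lambda>y. \<Sum>(s, f) \<leftarrow> \<mu>. (f y)\<^sup>2 * fun_act G \<phi> s h y)"
    using Cons by auto
  with c1 show ?case by (simp add: p continuous_on_add)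
qed

theorem mainTheorem11:
  fixes G :: "('g, 'm) monoid_scheme"
    and \<phi> :: "'g \<Rightarrow> 'a::t2_space \<Rightarrow> 'a"
    and x :: 'a
  assumes "group G"
    and "countable (carrier G)"
    and "compact (UNIV :: 'a set)"
    and "group_action G UNIV \<phi>"
    and "\<forall>g \<in> carrier G. continuous_on UNIV (\<phi> g)"
    and "minimal_action G \<phi>"
  shows "\<exists>F :: ('g \<times> ('a \<Rightarrow> real)) list filter.
           F \<noteq> bot \<and> eventually (\<lambda>\<mu>. \<mu> \<in> Pf G) F \<and>
           (\<forall>\<nu>. regular_borel_prob \<nu> \<longrightarrow>
              (\<forall>h. continuous_on UNIV h \<longrightarrow>
                 ((\<lambda>\<mu>. integral\<^sup>L \<nu> (gen_apply G \<phi> \<mu> h)) \<longlongrightarrow> h x) F))"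
proof -
  define I where "I = {(H, e). finite H \<and> (\<forall>h\<in>H. continuous_on UNIV (h::'a\<Rightarrow>real)) \<and> (e::real) > 0}"
  define A where "A = (\<lambda>(H, e). {\<mu>\<in>Pf G. \<forall>h\<in>H. \<forall>y. \<bar>gen_apply G \<phi> \<mu> h y - h x\<bar> \<le> e})"
  define F where "F = (INF i\<in>I. principal (A i))"
  have Ane: "A i \<noteq> {}" if "i \<in> I" for i
  proof -
    obtain H e where i: "i = (H, e)" by force
    have "finite H" "\<forall>h\<in>H. continuous_on UNIV h" "e > 0" using that by (auto simp: I_def i)
    from key[where x=x, OF assms(1,3,5,6) this] show ?thesis by (auto simp: A_def i)
  qed
  have dir: "\<exists>k\<in>I. principal (A k) \<le> principal (A i) \<sqinter> principal (A j)" if "i \<in> I" "j \<in> I" for i j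
  proof -
    obtain H1 e1 where i: "i = (H1, e1)" by force
    obtain H2 e2 where j: "j = (H2, e2)" by force
    have "(H1 \<union> H2, min e1 e2) \<in> I" using that by (auto simp: I_def i j)
    moreover have "A (H1 \<union> H2, min e1 e2) \<subseteq> A i \<inter> A j"
      by (auto simp: A_def i j)
    ultimately show ?thesis by (intro bexI[of _ "(H1 \<union> H2, min e1 e2)"]) (auto simp: inf_principal)
  qed
  have nb: "F \<noteq> bot"
  proof
    assume "F = bot"
    then obtain i where "i \<in> I" "principal (A i) = bot"
      unfolding F_def using INF_filter_bot_base[of I "\<lambda>i. principal (A i)", OF dir] by blast
    thus False using Ane by (metis principal_eq_bot_iff)
  qed
  have I1: "({}, 1) \<in> I" by (simp add: I_def)
  have ev: "eventually (\<lambda>\<mu>. \<mu> \<in> Pf G) F"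
    unfolding F_def by (rule eventually_INF1[OF I1]) (auto simp: A_def eventually_principal)
  have lim: "((\<lambda>\<mu>. integral\<^sup>L \<nu> (gen_apply G \<phi> \<mu> h)) \<longlongrightarrow> h x) F"
    if nu: "regular_borel_prob \<nu>" and hc: "continuous_on UNIV h" for \<nu> h
  proof (rule tendstoI)
    fix e :: real assume e: "e > 0"
    have Ih: "({h}, e/2) \<in> I" using hc e by (simp add: I_def)
    show "eventually (\<lambda>\<mu>. dist (integral\<^sup>L \<nu> (gen_apply G \<phi> \<mu> h)) (h x) < e) F"
      unfolding F_def
    proof (rule eventually_INF1[OF Ih], unfold eventually_principal, intro ballI)
      fix \<mu> assume "\<mu> \<in> A ({h}, e/2)"
      hence \<mu>: "\<mu> \<in> Pf G" "\<forall>y. \<bar>gen_apply G \<phi> \<mu> h y - h x\<bar> \<le> e/2" by (auto simp: A_def)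
      have "continuous_on UNIV (gen_apply G \<phi> \<mu> h)"
        by (rule cont_gen[OF assms(1,5) hc]) (use \<mu>(1) in \<open>auto simp: Pf_def\<close>)
      from int_bound[OF nu this \<mu>(2)] e
      show "dist (integral\<^sup>L \<nu> (gen_apply G \<phi> \<mu> h)) (h x) < e" by (simp add: dist_real_def)
    qed
  qed
  show ?thesis using nb ev lim by blast
qed

end
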